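(* Let $M$ be a $po$-$\Gamma$-semigroup. The following are equivalent: (1) $M$ is strongly regular. (2) $M$ is left regular, right regular, and for every $a\in M$ the set $(M\Gamma a\Gamma M]$ is a strongly regular sub-$\Gamma$-semigroup of $M$. (3) For every $a\in M$, $a\in (M\Gamma a]\cap (a\Gamma M]$ and $(M\Gamma a\Gamma M]$ is a strongly regular sub-$\Gamma$-semigroup of $M$.
   Context: A $po$-$\Gamma$-semigroup is a triple $(M,\Gamma,\le)$ where $M,\Gamma$ are nonempty sets with a map $M\times\Gamma\times M\to M$, $(a,\gamma,b)\mapsto a\gamma b$, satisfying $(a\gamma b)\mu c=a\gamma(b\mu c)$ for all $a,b,c\in M$, $\gamma,\mu\in\Gamma$, and $\le$ is a partial order on $M$ such that $a\le b$ implies $a\gamma c\le b\gamma c$ and $c\gamma a\le c\gamma b$ for all $c\in M$, $\gamma\in\Gamma$. For $A,B\subseteq M$, $A\Gamma B=\{a\gamma b: a\in A,\gamma\in\Gamma,b\in B\}$ (with $a\Gamma B$ meaning $\{a\}\Gamma B$, etc.), and $(A]=\{t\in M: t\le a \text{ for some } a\in A\}$. $M$ is left regular if $a\in(M\Gamma a\Gamma a]$ for all $a\in M$; right regular if $a\in(a\Gamma a\Gamma M]$ for all $a\in M$. A nonempty subset $T\subseteq M$ is a sub-$\Gamma$-semigroup if $T\Gamma T\subseteq T$; it is then a $po$-$\Gamma$-semigroup with the restricted operation and order. A $po$-$\Gamma$-semigroup $T$ is strongly regular if for every $a\in T$ there exist $x\in T$ and $\gamma,\mu\in\Gamma$ such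 that $a\le a\gamma x\mu a$ and $a\gamma x=x\gamma a=x\mu a=a\mu x$. *)

theory Defs
  imports Main
begin

definition po_gamma_semigroup ::
  "'a set \<Rightarrow> 'g set \<Rightarrow> ('a \<Rightarrow> 'g \<Rightarrow> 'a \<Rightarrow> 'a) \<Rightarrow> ('a \<Rightarrow> 'a \<Rightarrow> bool) \<Rightarrow> bool" where
  "po_gamma_semigroup M G op le \<longleftrightarrow>
     M \<noteq> {} \<and> G \<noteq> {} \<and>
     (\<forall>a\<in>M. \<forall>g\<in>G. \<forall>b\<in>M. op a g b \<in> M) \<and>
     (\<forall>a\<in>M. \<forall>b\<in>M. \<forall>c\<in>M. \<forall>g\<in>G. \<forall>m\<in>G. op (op a g b) m c = op a g (op b m c)) \<and>
     (\<forall>a\<in>M. le a a) \<and>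
     (\<forall>a\<in>M. \<forall>b\<in>M. le a b \<and> le b a \<longrightarrow> a = b) \<and>
     (\<forall>a\<in>M. \<forall>b\<in>M. \<forall>c\<in>M. le a b \<and> le b c \<longrightarrow> le a c) \<and>
     (\<forall>a\<in>M. \<forall>b\<in>M. le a b \<longrightarrow> (\<forall>c\<in>M. \<forall>g\<in>G. le (op a g c) (op b g c) \<and> le (op c g a) (op c g b)))"

definition gprod :: "'g set \<Rightarrow> ('a \<Rightarrow> 'g \<Rightarrow> 'a \<Rightarrow> 'a) \<Rightarrow> 'a set \<Rightarrow> 'a set \<Rightarrow> 'a set" where
  "gprod G op A B = {op a g b | a g b. a \<in> A \<and> g \<in> G \<and> b \<in> B}"

text \<open>(A] = elements of M below some element of A.\<close>
definition down :: "'a set \<Rightarrow> ('a \<Rightarrow> 'a \<Rightarrow> bool) \<Rightarrow> 'a set \<Rightarrow> 'a set" where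
  "down M le A = {t \<in> M. \<exists>a\<in>A. le t a}"

definition left_regular :: "'a set \<Rightarrow> 'g set \<Rightarrow> ('a \<Rightarrow> 'g \<Rightarrow> 'a \<Rightarrow> 'a) \<Rightarrow> ('a \<Rightarrow> 'a \<Rightarrow> bool) \<Rightarrow> bool" where
  "left_regular M G op le \<longleftrightarrow>
     (\<forall>a\<in>M. a \<in> down M le (gprod G op (gprod G op M {a}) {a}))"

definition right_regular :: "'a set \<Rightarrow> 'g set \<Rightarrow> ('a \<Rightarrow> 'g \<Rightarrow> 'a \<Rightarrow> 'a) \<Rightarrow> ('a \<Rightarrow> 'a \<Rightarrow> bool) \<Rightarrow> bool" where
  "right_regular M G op le \<longleftrightarrow>
     (\<forall>a\<in>M. a \<in> down M le (gprod G op (gprod G op {a} {a}) M))"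

definition sub_gamma_semigroup :: "'a set \<Rightarrow> 'g set \<Rightarrow> ('a \<Rightarrow> 'g \<Rightarrow> 'a \<Rightarrow> 'a) \<Rightarrow> 'a set \<Rightarrow> bool" where
  "sub_gamma_semigroup M G op T \<longleftrightarrow> T \<noteq> {} \<and> T \<subseteq> M \<and> gprod G op T T \<subseteq> T"

text \<open>Strong regularity of the po-Gamma-semigroup with carrier T (operation/order restricted).\<close>
definition strongly_regular :: "'a set \<Rightarrow> 'g set \<Rightarrow> ('a \<Rightarrow> 'g \<Rightarrow> 'a \<Rightarrow> 'a) \<Rightarrow> ('a \<Rightarrow> 'a \<Rightarrow> bool) \<Rightarrow> bool" where
  "strongly_regular T G op le \<longleftrightarrow>
     (\<forall>a\<in>T. \<exists>x\<in>T. \<exists>g\<in>G. \<exists>m\<in>G.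
        le a (op (op a g x) m a) \<and>
        op a g x = op x g a \<and> op x g a = op x m a \<and> op x m a = op a m x)"

end

theory Submission
  imports Defs
begin

locale pgs =
  fixes M :: "'a set" and G :: "'g set" and op :: "'a \<Rightarrow> 'g \<Rightarrow> 'a \<Rightarrow> 'a"
    and le :: "'a \<Rightarrow> 'a \<Rightarrow> bool"
  assumes P: "po_gamma_semigroup M G op le"
begin

lemmas PP = P[unfolded po_gamma_semigroup_def]

lemma cl[simp]: "a \<in> M \<Longrightarrow> g \<in> G \<Longrightarrow> b \<in> M \<Longrightarrow> op a g b \<in> M"
  using PP[THEN conjunct2, THEN conjunct2, THEN conjunct1] by blast

lemma as[simp]: "a \<in> M \<Longrightarrow> b \<in> M \<Longrightarrow> c \<in> M \<Longrightarrow> g \<in> G \<Longrightarrow> m \<in> G \<Longrightarrow>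
   op (op a g b) m c = op a g (op b m c)"
  using PP[THEN conjunct2, THEN conjunct2, THEN conjunct2, THEN conjunct1] by blast

lemma rf: "a \<in> M \<Longrightarrow> le a a"
  using PP[THEN conjunct2, THEN conjunct2, THEN conjunct2, THEN conjunct2, THEN conjunct1] by blast

lemma tr: "le a b \<Longrightarrow> le b c \<Longrightarrow> a \<in> M \<Longrightarrow> b \<in> M \<Longrightarrow> c \<in> M \<Longrightarrow> le a c"
  using PP[THEN conjunct2, THEN conjunct2, THEN conjunct2, THEN conjunct2, THEN conjunct2, THEN conjunct2, THEN conjunct1] by blast

lemma mono: "le a b \<Longrightarrow> a \<in> M \<Longrightarrow> b \<in> M \<Longrightarrow> c \<in> M \<Longrightarrow> g \<in> G \<Longrightarrow> le (op a g c) (op b g c) \<and> le (op c g a) (op c g b)"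
  using PP[THEN conjunct2, THEN conjunct2, THEN conjunct2, THEN conjunct2, THEN conjunct2, THEN conjunct2, THEN conjunct2] by blast

lemma monoL: "le a b \<Longrightarrow> a \<in> M \<Longrightarrow> b \<in> M \<Longrightarrow> c \<in> M \<Longrightarrow> g \<in> G \<Longrightarrow> le (op a g c) (op b g c)"
  using mono by blast

lemma monoR: "le a b \<Longrightarrow> a \<in> M \<Longrightarrow> b \<in> M \<Longrightarrow> c \<in> M \<Longrightarrow> g \<in> G \<Longrightarrow> le (op c g a) (op c g b)"
  using mono by blast

lemma gp: "z \<in> gprod G op A B \<longleftrightarrow> (\<exists>a g b. z = op a g b \<and> a \<in> A \<and> g \<in> G \<and> b \<in> B)"
  unfolding gprod_def by blast

lemma dn: "t \<in> down M le A \<longleftrightarrow> t \<in> M \<and> (\<exists>z. z \<in> A \<and> le t z)"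
  unfolding down_def by blast

lemma downI: "t \<in> M \<Longrightarrow> z \<in> A \<Longrightarrow> le t z \<Longrightarrow> t \<in> down M le A"
  unfolding down_def by blast

lemma gpI: "a \<in> A \<Longrightarrow> g \<in> G \<Longrightarrow> b \<in> B \<Longrightarrow> op a g b \<in> gprod G op A B"
  unfolding gprod_def by blast

lemma memT: "t \<in> down M le (gprod G op (gprod G op M {a}) M) \<longleftrightarrow>
   t \<in> M \<and> (\<exists>p g m q. p \<in> M \<and> g \<in> G \<and> m \<in> G \<and> q \<in> M \<and> le t (op (op p g a) m q))"
  unfolding dn gp by blast

lemma bwd:
  assumes "\<forall>a\<in>M. a \<in> down M le (gprod G op (gprod G op M {a}) M) \<and>
                  strongly_regular (down M le (gprod G op (gprod G op M {a}) M)) G op le"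
  shows "strongly_regular M G op le"
  unfolding strongly_regular_def
proof
  fix a assume a: "a \<in> M"
  with assms have "a \<in> down M le (gprod G op (gprod G op M {a}) M)"
     and S: "strongly_regular (down M le (gprod G op (gprod G op M {a}) M)) G op le" by auto
  then obtain x g m where "x \<in> down M le (gprod G op (gprod G op M {a}) M)" "g \<in> G" "m \<in> G"
     "le a (op (op a g x) m a) \<and> op a g x = op x g a \<and> op x g a = op x m a \<and> op x m a = op a m x"
    unfolding strongly_regular_def by blast
  moreover then have "x \<in> M" unfolding down_def by blast
  ultimately show "\<exists>x\<in>M. \<exists>g\<in>G. \<exists>m\<in>G. le a (op (op a g x) m a) \<and>
        op a g x = op x g a \<and> op x g a = op x m a \<and> op x m a = op a m x" by blast
qed

lemma fwd:
  assumes SR: "strongly_regular M G op le" and a: "a \<in> M"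
  shows "a \<in> down M le (gprod G op (gprod G op M {a}) {a})"
    "a \<in> down M le (gprod G op (gprod G op {a} {a}) M)"
    "a \<in> down M le (gprod G op M {a}) \<inter> down M le (gprod G op {a} M)"
    "sub_gamma_semigroup M G op (down M le (gprod G op (gprod G op M {a}) M))"
    "strongly_regular (down M le (gprod G op (gprod G op M {a}) M)) G op le"
proof -
  obtain x g m where x: "x \<in> M" "g \<in> G" "m \<in> G" and l: "le a (op (op a g x) m a)"
    and e1: "op a g x = op x g a" and e2: "op x g a = op x m a" and e3: "op x m a = op a m x"
    using SR a unfolding strongly_regular_def by blast
  have l1: "le a (op (op x g a) m a)" using l by (simp only: e1)
  show "a \<in> down M le (gprod G op (gprod G op M {a}) {a})"
    by (rule downI[OF a gpI[OF gpI[OF x(1) x(2) singletonI] x(3) singletonI] l1])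
  have eq: "op (op a g x) m a = op (op a g a) m x"
  proof -
    have "op (op a g x) m a = op a g (op x m a)" using a x by simp
    also have "\<dots> = op a g (op a m x)" by (simp only: e3)
    also have "\<dots> = op (op a g a) m x" using a x by simp
    finally show ?thesis .
  qed
  have l': "le a (op (op a g a) m x)" using l by (simp only: eq)
  show "a \<in> down M le (gprod G op (gprod G op {a} {a}) M)"
    by (rule downI[OF a gpI[OF gpI[OF singletonI x(2) singletonI] x(3) x(1)] l'])
  show "a \<in> down M le (gprod G op M {a}) \<inter> down M le (gprod G op {a} M)"
  proof
    show "a \<in> down M le (gprod G op M {a})"
      by (rule downI[OF a gpI[OF cl[OF a x(2) x(1)] x(3) singletonI] l])
    have "op (op a g x) m a = op a g (op x m a)" using a x by simp
    then have l'': "le a (op a g (op x m a))" using l by (simp only:)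
    show "a \<in> down M le (gprod G op {a} M)"
      by (rule downI[OF a gpI[OF singletonI x(2) cl[OF x(1) x(3) a]] l''])
  qed
  have aT: "a \<in> down M le (gprod G op (gprod G op M {a}) M)"
    unfolding memT using a x l1 by blast
  show "sub_gamma_semigroup M G op (down M le (gprod G op (gprod G op M {a}) M))"
    unfolding sub_gamma_semigroup_def
  proof (intro conjI)
    show "down M le (gprod G op (gprod G op M {a}) M) \<noteq> {}" using aT by blast
    show "down M le (gprod G op (gprod G op M {a}) M) \<subseteq> M" unfolding down_def by blast
    show "gprod G op (down M le (gprod G op (gprod G op M {a}) M)) (down M le (gprod G op (gprod G op M {a}) M))
       \<subseteq> down M le (gprod G op (gprod G op M {a}) M)"
    proof
      fix z assume "z \<in> gprod G op (down M le (gprod G op (gprod G op M {a}) M)) (down M le (gprod G op (gprod G op M {a}) M))"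
      then obtain t h s where z: "z = op t h s" "h \<in> G" and t: "t \<in> down M le (gprod G op (gprod G op M {a}) M)"
        and s: "s \<in> down M le (gprod G op (gprod G op M {a}) M)" unfolding gp by blast
      from t obtain p g1 m1 q where tM: "t \<in> M" and pq: "p \<in> M" "g1 \<in> G" "m1 \<in> G" "q \<in> M"
        and lt: "le t (op (op p g1 a) m1 q)" unfolding memT by blast
      have sM: "s \<in> M" using s unfolding down_def by blast
      have "le (op t h s) (op (op (op p g1 a) m1 q) h s)"
        using monoL[OF lt] tM pq a sM z by simp
      moreover have "op (op (op p g1 a) m1 q) h s = op (op p g1 a) m1 (op q h s)" using pq a sM z by simp
      ultimately have "le z (op (op p g1 a) m1 (op q h s))" using z by simp
      moreover have "op q h s \<in> M" "z \<in> M" using z pq sM tM by auto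
      ultimately show "z \<in> down M le (gprod G op (gprod G op M {a}) M)"
        unfolding memT using pq by blast
    qed
  qed
  show "strongly_regular (down M le (gprod G op (gprod G op M {a}) M)) G op le"
    unfolding strongly_regular_def
  proof
    fix b assume b: "b \<in> down M le (gprod G op (gprod G op M {a}) M)"
    from b obtain p g1 m1 q where bM: "b \<in> M" and pq: "p \<in> M" "g1 \<in> G" "m1 \<in> G" "q \<in> M"
        and lb: "le b (op (op p g1 a) m1 q)" unfolding memT by blast
    obtain x g m where x: "x \<in> M" "g \<in> G" "m \<in> G" and l: "le b (op (op b g x) m b)"
      and e1: "op b g x = op x g b" and e2: "op x g b = op x m b" and e3: "op x m b = op b m x"
      using SR bM unfolding strongly_regular_def by blast
    define e where "e = op b m x"
    define y where "y = op (op x m b) m x"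
    have eM: "e \<in> M" and yM: "y \<in> M" using x bM unfolding e_def y_def by auto
    have "op b g x = op b m x" using e1 e2 e3 by simp
    then have l2: "le b (op e m b)" using l unfolding e_def by (simp only:)
    have l3: "le (op e m b) (op e m (op e m b))" using monoR[OF l2] eM bM x by simp
    have l4: "le b (op (op b m y) m b)"
    proof -
      have "op (op b m y) m b = op e m (op e m b)" unfolding y_def e_def using x bM by simp
      moreover have "le b (op e m (op e m b))" by (rule tr[OF l2 l3]) (use eM bM x in auto)
      ultimately show ?thesis by (simp only:)
    qed
    have c1: "op b m y = op e m e" unfolding y_def e_def using x bM by simp
    have "op y m b = op (op x m b) m (op x m b)" unfolding y_def using x bM by simp
    then have c2: "op y m b = op e m e" unfolding e_def by (simp only: e3)
    have yT: "y \<in> down M le (gprod G op (gprod G op M {a}) M)"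
    proof -
      have "le (op x m b) (op x m (op (op p g1 a) m1 q))" using monoR[OF lb] x bM pq a by simp
      then have "le y (op (op x m (op (op p g1 a) m1 q)) m x)"
        unfolding y_def by (rule monoL) (use x bM pq a in auto)
      moreover have "op (op x m (op (op p g1 a) m1 q)) m x = op (op (op x m p) g1 a) m1 (op q m x)"
        using x pq a by simp
      ultimately have "le y (op (op (op x m p) g1 a) m1 (op q m x))" by simp
      moreover have "op x m p \<in> M" "op q m x \<in> M" using x pq by auto
      ultimately show ?thesis unfolding memT using yM pq by blast
    qed
    show "\<exists>x\<in>down M le (gprod G op (gprod G op M {a}) M). \<exists>g\<in>G. \<exists>m\<in>G.
         le b (op (op b g x) m b) \<and> op b g x = op x g b \<and> op x g b = op x m b \<and> op x m b = op b m x"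
    proof -
      have "le b (op (op b m y) m b) \<and> op b m y = op y m b \<and> op y m b = op y m b \<and> op y m b = op b m y"
        using l4 c1 c2 by simp
      then show ?thesis using yT x(3) by blast
    qed
  qed
qed

end

theorem theorem9:
  fixes M :: "'a set" and G :: "'g set" and op :: "'a \<Rightarrow> 'g \<Rightarrow> 'a \<Rightarrow> 'a"
    and le :: "'a \<Rightarrow> 'a \<Rightarrow> bool"
  assumes "po_gamma_semigroup M G op le"
  shows "(strongly_regular M G op le
            \<longleftrightarrow> (left_regular M G op le \<and> right_regular M G op le \<and>
                 (\<forall>a\<in>M. sub_gamma_semigroup M G op (down M le (gprod G op (gprod G op M {a}) M)) \<and>
                        strongly_regular (down M le (gprod G op (gprod G op M {a}) M)) G op le)))
       \<and> (strongly_regular M G op le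
            \<longleftrightarrow> (\<forall>a\<in>M. a \<in> down M le (gprod G op M {a}) \<inter> down M le (gprod G op {a} M) \<and>
                        sub_gamma_semigroup M G op (down M le (gprod G op (gprod G op M {a}) M)) \<and>
                        strongly_regular (down M le (gprod G op (gprod G op M {a}) M)) G op le))"
proof -
  interpret pgs M G op le using assms by unfold_locales
  have L: "a \<in> down M le (gprod G op (gprod G op M {a}) M)"
    if "a \<in> M" "a \<in> down M le (gprod G op (gprod G op M {a}) {a})" for a
  proof -
    from that obtain x g m where "x \<in> M" "g \<in> G" "m \<in> G" "le a (op (op x g a) m a)"
      unfolding dn gp by blast
    then show ?thesis unfolding memT using that by blast
  qed
  have R: "a \<in> down M le (gprod G op (gprod G op M {a}) M)"
    if a: "a \<in> M" and h: "a \<in> down M le (gprod G op M {a}) \<inter> down M le (gprod G op {a} M)" for a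
  proof -
    from h obtain x g where x: "x \<in> M" "g \<in> G" and l1: "le a (op x g a)"
      unfolding Int_iff dn gp by blast
    from h obtain y m where y: "y \<in> M" "m \<in> G" and l2: "le a (op a m y)"
      unfolding Int_iff dn gp by blast
    have "le (op x g a) (op x g (op a m y))" using monoR[OF l2] a x y by simp
    then have "le a (op (op x g a) m y)" using tr[OF l1] a x y by simp
    then show ?thesis unfolding memT using a x y by blast
  qed
  show ?thesis
  proof (intro conjI iffI)
    assume S: "strongly_regular M G op le"
    show "left_regular M G op le" unfolding left_regular_def using fwd(1)[OF S] by blast
    show "right_regular M G op le" unfolding right_regular_def using fwd(2)[OF S] by blast
    show "\<forall>a\<in>M. sub_gamma_semigroup M G op (down M le (gprod G op (gprod G op M {a}) M)) \<and>
                        strongly_regular (down M le (gprod G op (gprod G op M {a}) M)) G op le"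
      using fwd(4,5)[OF S] by blast
  next
    assume S: "strongly_regular M G op le"
    show "\<forall>a\<in>M. a \<in> down M le (gprod G op M {a}) \<inter> down M le (gprod G op {a} M) \<and>
                        sub_gamma_semigroup M G op (down M le (gprod G op (gprod G op M {a}) M)) \<and>
                        strongly_regular (down M le (gprod G op (gprod G op M {a}) M)) G op le"
      using fwd(3,4,5)[OF S] by blast
  next
    assume H: "left_regular M G op le \<and> right_regular M G op le \<and>
                 (\<forall>a\<in>M. sub_gamma_semigroup M G op (down M le (gprod G op (gprod G op M {a}) M)) \<and>
                        strongly_regular (down M le (gprod G op (gprod G op M {a}) M)) G op le)"
    show "strongly_regular M G op le"
    proof (rule bwd)
      show "\<forall>a\<in>M. a \<in> down M le (gprod G op (gprod G op M {a}) M) \<and>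
                  strongly_regular (down M le (gprod G op (gprod G op M {a}) M)) G op le"
        using H L unfolding left_regular_def by blast
    qed
  next
    assume H: "\<forall>a\<in>M. a \<in> down M le (gprod G op M {a}) \<inter> down M le (gprod G op {a} M) \<and>
                        sub_gamma_semigroup M G op (down M le (gprod G op (gprod G op M {a}) M)) \<and>
                        strongly_regular (down M le (gprod G op (gprod G op M {a}) M)) G op le"
    show "strongly_regular M G op le"
    proof (rule bwd)
      show "\<forall>a\<in>M. a \<in> down M le (gprod G op (gprod G op M {a}) M) \<and>
                  strongly_regular (down M le (gprod G op (gprod G op M {a}) M)) G op le"
      proof
        fix a assume a: "a \<in> M"
        from bspec[OF H a] have h1: "a \<in> down M le (gprod G op M {a}) \<inter> down M le (gprod G op {a} M)"
          and h2: "strongly_regular (down M le (gprod G op (gprod G op M {a}) M)) G op le" by (rule conjunct1, blast)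
        show "a \<in> down M le (gprod G op (gprod G op M {a}) M) \<and>
                  strongly_regular (down M le (gprod G op (gprod G op M {a}) M)) G op le"
          using R[OF a h1] h2 by (rule conjI)
      qed
    qed
  qed
qed

end
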